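(* Let $b\ge1$, let $c_{\mathrm{ov}}\ge0$, $c_i>0$ and $c_i^\sharp\ge0$ for $i\in[b]$, and let $L^0_{i,\{s,\dots,b\}}>0$ ($1\le s\le i\le b$) be the layer-wise smoothness constants described in the context. For a probability vector $p=(p_1,\dots,p_b)$ (nonnegative entries summing to $1$) define the cost $$C(p)=\frac{c_{\mathrm{ov}}+\sum_{i=1}^b(c_i+c_i^\sharp)\sum_{s=1}^ip_s}{\min_{i\in[b]}\left[\sum_{s=1}^i\frac{p_s}{2L^0_{i,\{s,\dots,b\}}}\right]}.$$ Then $C$ is minimized over probability vectors by $p=(1,0,\dots,0)$ if and only if $$L^0_{1,\{1,\dots,b\}}=\max_{i\in[b]}L^0_{i,\{1,\dots,b\}}.$$
   Context: Setting: $\mathcal X=\mathcal X_1\times\cdots\times\mathcal X_b$, $\mathcal X_i=\mathbb R^{m_i\times n_i}$ with norms $\|\cdot\|_{(i)}$, and $f:\mathcal X\to\mathbb R$ continuously differentiable. The constants $L^0_{i,\{s,\dots,b\}}$ are the smallest constants such that, for each $s\in[b]$, all $X$ and all $\Gamma$ with $\Gamma_j=0$ for $j<s$, $f(X+\Gamma)-f(X)-\langle\nabla f(X),\Gamma\rangle\le\sum_{i\ge s}\frac{L^0_{i,\{s,\dots,b\}}}{2}\|\Gamma_i\|_{(i)}^2$ (layer-wise smoothness for the randomized progressive training supports $\{s,\dots,b\}$). The quantity $C(p)$ is (proportional to) the expected total compute cost of reaching an $\varepsilon$-stationary point with randomized progressive training, where layer $s$ is chosen as the smallest updated layer with probability $p_s$;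 $C(p)=+\infty$ when the denominator vanishes. *)

theory Defs
  imports "HOL-Analysis.Analysis"
begin

text \<open>The space X = X_1 x ... x X_b (X_i = R^(m_i x n_i) with Frobenius inner product)
  is represented as real^'k for a finite coordinate type 'k, together with a block
  assignment blk :: 'k => nat (coordinate k belongs to block blk k).\<close>

definition blockpart :: "('k::finite \<Rightarrow> nat) \<Rightarrow> nat \<Rightarrow> real^'k \<Rightarrow> real^'k" where
  "blockpart blk i G = (\<chi> k. if blk k = i then G $ k else 0)"

definition block_space :: "('k::finite \<Rightarrow> nat) \<Rightarrow> nat \<Rightarrow> (real^'k) set" where
  "block_space blk i = {v. \<forall>k. blk k \<noteq> i \<longrightarrow> v $ k = 0}"

definition is_block_norm :: "('k::finite \<Rightarrow> nat) \<Rightarrow> nat \<Rightarrow> (real^'k \<Rightarrow> real) \<Rightarrow> bool" where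
  "is_block_norm blk i N \<longleftrightarrow>
     (\<forall>v\<in>block_space blk i. N v \<ge> 0 \<and> (N v = 0 \<longleftrightarrow> v = 0)) \<and>
     (\<forall>v\<in>block_space blk i. \<forall>a::real. N (a *\<^sub>R v) = \<bar>a\<bar> * N v) \<and>
     (\<forall>v\<in>block_space blk i. \<forall>w\<in>block_space blk i. N (v + w) \<le> N v + N w)"

definition valid_smooth ::
  "(real^'k \<Rightarrow> real) \<Rightarrow> (real^'k \<Rightarrow> real^'k) \<Rightarrow> ('k::finite \<Rightarrow> nat) \<Rightarrow> (nat \<Rightarrow> real^'k \<Rightarrow> real)
   \<Rightarrow> nat \<Rightarrow> nat \<Rightarrow> (nat \<Rightarrow> real) \<Rightarrow> bool" where
  "valid_smooth f g blk N b s Lt \<longleftrightarrow>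
     (\<forall>X G. (\<forall>k. blk k < s \<longrightarrow> G $ k = 0) \<longrightarrow>
        f (X + G) - f X - g X \<bullet> G \<le> (\<Sum>i\<in>{s..b}. Lt i / 2 * (N i (blockpart blk i G))\<^sup>2))"

text \<open>L i s = L^0_{i,{s,...,b}}: for every s, the tuple (L i s)_{i>=s} is valid and is the
  smallest (componentwise least) valid tuple.\<close>
definition layer_smoothness_consts ::
  "(real^'k \<Rightarrow> real) \<Rightarrow> (real^'k \<Rightarrow> real^'k) \<Rightarrow> ('k::finite \<Rightarrow> nat) \<Rightarrow> (nat \<Rightarrow> real^'k \<Rightarrow> real)
   \<Rightarrow> nat \<Rightarrow> (nat \<Rightarrow> nat \<Rightarrow> real) \<Rightarrow> bool" where
  "layer_smoothness_consts f g blk N b L \<longleftrightarrow>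
     (\<forall>s\<in>{1..b}. valid_smooth f g blk N b s (\<lambda>i. L i s) \<and>
        (\<forall>Lt. valid_smooth f g blk N b s Lt \<longrightarrow> (\<forall>i\<in>{s..b}. L i s \<le> Lt i)))"

definition prob_vec :: "nat \<Rightarrow> (nat \<Rightarrow> real) \<Rightarrow> bool" where
  "prob_vec b p \<longleftrightarrow> (\<forall>s\<in>{1..b}. p s \<ge> 0) \<and> (\<Sum>s=1..b. p s) = 1"

definition cost_den :: "nat \<Rightarrow> (nat \<Rightarrow> nat \<Rightarrow> real) \<Rightarrow> (nat \<Rightarrow> real) \<Rightarrow> real" where
  "cost_den b L p = Min ((\<lambda>i. \<Sum>s=1..i. p s / (2 * L i s)) ` {1..b})"

definition cost_num :: "nat \<Rightarrow> real \<Rightarrow> (nat \<Rightarrow> real) \<Rightarrow> (nat \<Rightarrow> real) \<Rightarrow> (nat \<Rightarrow> real) \<Rightarrow> real" where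
  "cost_num b cov c csh p = cov + (\<Sum>i=1..b. (c i + csh i) * (\<Sum>s=1..i. p s))"

definition cost :: "nat \<Rightarrow> real \<Rightarrow> (nat \<Rightarrow> real) \<Rightarrow> (nat \<Rightarrow> real) \<Rightarrow> (nat \<Rightarrow> nat \<Rightarrow> real)
   \<Rightarrow> (nat \<Rightarrow> real) \<Rightarrow> ereal" where
  "cost b cov c csh L p =
     (if cost_den b L p = 0 then \<infinity> else ereal (cost_num b cov c csh p / cost_den b L p))"

end

theory Submission
  imports Defs
begin

lemma sum12: "2 \<le> (i::nat) \<Longrightarrow> (\<Sum>s=1..i. h s) = h 1 + h 2 + (\<Sum>s=3..i. (h s :: real))"
proof -
  assume "2 \<le> i"
  then have "(\<Sum>s=1..i. h s) = h 1 + (\<Sum>s=2..i. h s)"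
    using sum.atLeast_Suc_atMost[of 1 i h] by (simp add: numeral_2_eq_2)
  also have "(\<Sum>s=2..i. h s) = h 2 + (\<Sum>s=3..i. h s)"
    using sum.atLeast_Suc_atMost[of 2 i h] \<open>2 \<le> i\<close> by (simp add: numeral_3_eq_3)
  finally show ?thesis by simp
qed

lemma sum1: "1 \<le> (i::nat) \<Longrightarrow> (\<Sum>s=1..i. h s) = h 1 + (\<Sum>s=2..i. (h s :: real))"
  using sum.atLeast_Suc_atMost[of 1 i h] by (simp add: numeral_2_eq_2)

theorem theorem3:
  fixes f :: "real^'k::finite \<Rightarrow> real" and g :: "real^'k \<Rightarrow> real^'k"
    and blk :: "'k \<Rightarrow> nat" and N :: "nat \<Rightarrow> real^'k \<Rightarrow> real"
    and b :: nat and cov :: real and c csh :: "nat \<Rightarrow> real" and L :: "nat \<Rightarrow> nat \<Rightarrow> real"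
  assumes b: "b \<ge> 1"
    and blk_range: "\<forall>k. blk k \<in> {1..b}"
    and blk_nonempty: "\<forall>i\<in>{1..b}. \<exists>k. blk k = i"
    and norms: "\<forall>i\<in>{1..b}. is_block_norm blk i (N i)"
    and grad: "\<forall>X. (f has_derivative (\<lambda>h. g X \<bullet> h)) (at X)"
    and grad_cont: "continuous_on UNIV g"
    and Lsmooth: "layer_smoothness_consts f g blk N b L"
    and Lpos: "\<forall>i\<in>{1..b}. \<forall>s\<in>{1..i}. L i s > 0"
    and cov: "cov \<ge> 0"
    and cpos: "\<forall>i\<in>{1..b}. c i > 0"
    and cshnn: "\<forall>i\<in>{1..b}. csh i \<ge> 0"
  shows "(\<forall>p. prob_vec b p \<longrightarrow>
            cost b cov c csh L (\<lambda>s. if s = 1 then 1 else 0) \<le> cost b cov c csh L p)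
         \<longleftrightarrow> L 1 1 = Max ((\<lambda>i. L i 1) ` {1..b})"
proof -
  define e1 :: "nat \<Rightarrow> real" where "e1 = (\<lambda>s. if s = 1 then 1 else 0)"
  define M where "M = Max ((\<lambda>i. L i 1) ` {1..b})"
  define S where "S = (\<Sum>i=1..b. c i + csh i)"
  have fin: "finite ((\<lambda>i. L i 1) ` {1..b})" by simp
  have Mge: "L i 1 \<le> M" if "i \<in> {1..b}" for i
    unfolding M_def using fin that by (intro Max_ge) auto
  have Min: "M \<in> (\<lambda>i. L i 1) ` {1..b}" unfolding M_def using b by (intro Max_in) auto
  then obtain j where j: "j \<in> {1..b}" "M = L j 1" by auto
  have L1pos: "L i 1 > 0" if "i \<in> {1..b}" for i using Lpos that by auto
  have Mpos: "M > 0" using L1pos j by auto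
  have anonn: "c i + csh i \<ge> 0" if "i \<in> {1..b}" for i
    using cpos cshnn that by (meson add_nonneg_nonneg less_imp_le)
  have Snn: "S \<ge> 0" unfolding S_def using anonn by (auto intro: sum_nonneg)
  have e1_sum: "(\<Sum>s=1..i. e1 s / (2 * L i s)) = 1 / (2 * L i 1)" if "1 \<le> i" for i
    using sum1[OF that, of "\<lambda>s. e1 s / (2 * L i s)"] by (simp add: e1_def)
  have e1_P: "(\<Sum>s=1..i. e1 s) = 1" if "1 \<le> i" for i
    using sum1[OF that, of e1] by (simp add: e1_def)
  have num_e1: "cost_num b cov c csh e1 = cov + S"
  proof -
    have "(\<Sum>i=1..b. (c i + csh i) * (\<Sum>s=1..i. e1 s)) = (\<Sum>i=1..b. c i + csh i)"
    proof (rule sum.cong)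
      fix i assume "i \<in> {1..b}"
      then have "(\<Sum>s=1..i. e1 s) = 1" using e1_P by auto
      then show "(c i + csh i) * (\<Sum>s=1..i. e1 s) = c i + csh i" by simp
    qed simp
    then show ?thesis unfolding cost_num_def S_def by simp
  qed
  have den_e1: "cost_den b L e1 = 1 / (2 * M)"
    unfolding cost_den_def
  proof (rule Min_eqI)
    show "finite ((\<lambda>i. \<Sum>s = 1..i. e1 s / (2 * L i s)) ` {1..b})" by simp
    show "\<And>y. y \<in> (\<lambda>i. \<Sum>s = 1..i. e1 s / (2 * L i s)) ` {1..b} \<Longrightarrow> 1 / (2 * M) \<le> y"
    proof -
      fix y assume "y \<in> (\<lambda>i. \<Sum>s = 1..i. e1 s / (2 * L i s)) ` {1..b}"
      then obtain i where i: "i \<in> {1..b}" "y = (\<Sum>s = 1..i. e1 s / (2 * L i s))" by auto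
      then have "y = 1 / (2 * L i 1)" using e1_sum by auto
      then show "1 / (2 * M) \<le> y" using Mge[OF i(1)] L1pos[OF i(1)]
        by (simp add: frac_le)
    qed
    show "1 / (2 * M) \<in> (\<lambda>i. \<Sum>s = 1..i. e1 s / (2 * L i s)) ` {1..b}"
      using j e1_sum by (auto intro!: image_eqI[where x=j])
  qed
  have cost_e1: "cost b cov c csh L e1 = ereal ((cov + S) * (2 * M))"
    unfolding cost_def num_e1 den_e1 using Mpos by simp
  show ?thesis
  proof
    assume H: "\<forall>p. prob_vec b p \<longrightarrow>
            cost b cov c csh L (\<lambda>s. if s = 1 then 1 else 0) \<le> cost b cov c csh L p"
    show "L 1 1 = Max ((\<lambda>i. L i 1) ` {1..b})"
      unfolding M_def[symmetric]
    proof (rule ccontr)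
      assume ne: "L 1 1 \<noteq> M"
      have "L 1 1 \<le> M" using Mge b by auto
      with ne have lt: "L 1 1 < M" by simp
      with j have "j \<noteq> 1" by auto
      with j have b2: "2 \<le> b" by auto
      define q where "q = L 1 1 / M"
      have q0: "0 < q" "q < 1" unfolding q_def using lt L1pos b Mpos by auto
      define p :: "nat \<Rightarrow> real" where "p = (\<lambda>s. if s = 1 then q else if s = 2 then 1 - q else 0)"
      have pP: "(\<Sum>s=1..i. p s) = 1" if "2 \<le> i" for i
        using sum12[OF that, of p] by (simp add: p_def)
      have pv: "prob_vec b p"
        unfolding prob_vec_def using pP[OF b2] q0 by (auto simp: p_def)
      have valid1: "valid_smooth f g blk N b 1 (\<lambda>i. L i 1)"
        using Lsmooth b unfolding layer_smoothness_consts_def by auto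
      have valid2: "valid_smooth f g blk N b 2 (\<lambda>i. L i 1)"
        unfolding valid_smooth_def
      proof (intro allI impI)
        fix X G assume G: "\<forall>k. blk k < 2 \<longrightarrow> G $ k = (0::real)"
        have bp: "blockpart blk 1 G = 0"
          unfolding blockpart_def using G by (auto simp: vec_eq_iff)
        have "N 1 0 = 0"
          using norms b unfolding is_block_norm_def block_space_def by auto
        then have z: "N 1 (blockpart blk 1 G) = 0" using bp by simp
        have "f (X + G) - f X - g X \<bullet> G \<le> (\<Sum>i\<in>{1..b}. L i 1 / 2 * (N i (blockpart blk i G))\<^sup>2)"
          using valid1 G unfolding valid_smooth_def by auto
        also have "\<dots> = (\<Sum>i\<in>{2..b}. L i 1 / 2 * (N i (blockpart blk i G))\<^sup>2)"
          using sum1[OF b, of "\<lambda>i. L i 1 / 2 * (N i (blockpart blk i G))\<^sup>2"] z by simp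
        finally show "f (X + G) - f X - g X \<bullet> G \<le> (\<Sum>i\<in>{2..b}. L i 1 / 2 * (N i (blockpart blk i G))\<^sup>2)" .
      qed
      have L21: "L i 2 \<le> L i 1" if "i \<in> {2..b}" for i
      proof -
        have "2 \<in> {1..b}" using b2 by auto
        then have "\<forall>Lt. valid_smooth f g blk N b 2 Lt \<longrightarrow> (\<forall>i\<in>{2..b}. L i 2 \<le> Lt i)"
          using Lsmooth unfolding layer_smoothness_consts_def by blast
        then show ?thesis using valid2 that by blast
      qed
      have den_ge: "1 / (2 * M) \<le> cost_den b L p"
        unfolding cost_den_def
      proof (rule Min.boundedI)
        show "finite ((\<lambda>i. \<Sum>s = 1..i. p s / (2 * L i s)) ` {1..b})" by simp
        show "(\<lambda>i. \<Sum>s = 1..i. p s / (2 * L i s)) ` {1..b} \<noteq> {}" using b by auto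
        fix y assume "y \<in> (\<lambda>i. \<Sum>s = 1..i. p s / (2 * L i s)) ` {1..b}"
        then obtain i where i: "i \<in> {1..b}" "y = (\<Sum>s = 1..i. p s / (2 * L i s))" by auto
        show "1 / (2 * M) \<le> y"
        proof (cases "i = 1")
          case True
          then have "y = q / (2 * L 1 1)" using i by (simp add: p_def)
          also have "\<dots> = 1 / (2 * M)" unfolding q_def using Mpos L1pos[of 1] b by (simp add: field_simps)
          finally show ?thesis by simp
        next
          case False
          then have i2: "2 \<le> i" "i \<in> {2..b}" using i by auto
          have y: "y = q / (2 * L i 1) + (1 - q) / (2 * L i 2)"
            using i sum12[OF i2(1), of "\<lambda>s. p s / (2 * L i s)"] by (simp add: p_def)
          have Li2: "L i 2 > 0" using Lpos i i2 by auto
          have a1: "q / (2 * M) \<le> q / (2 * L i 1)"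
            using q0 Mge[OF i(1)] L1pos[OF i(1)] by (intro divide_left_mono) auto
          have a2: "(1 - q) / (2 * M) \<le> (1 - q) / (2 * L i 2)"
            using q0 Mge[OF i(1)] L21[OF i2(2)] Li2 by (intro divide_left_mono) auto
          have "1 / (2 * M) = q / (2 * M) + (1 - q) / (2 * M)" by (simp add: add_divide_distrib[symmetric])
          also have "\<dots> \<le> y" using a1 a2 y by simp
          finally show ?thesis .
        qed
      qed
      have "1 / (2 * M) > 0" using Mpos by simp
      then have denpos: "cost_den b L p > 0" using den_ge by linarith
      have nump: "cost_num b cov c csh p = cov + (c 1 + csh 1) * q + (S - (c 1 + csh 1))"
      proof -
        have "cost_num b cov c csh p = cov + ((c 1 + csh 1) * q + (\<Sum>i=2..b. (c i + csh i)))"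
        proof -
          have e: "(\<Sum>i=2..b. (c i + csh i) * (\<Sum>s=1..i. p s)) = (\<Sum>i=2..b. (c i + csh i))"
          proof (rule sum.cong)
            fix i assume "i \<in> {2..b}"
            then have "(\<Sum>s=1..i. p s) = 1" using pP by auto
            then show "(c i + csh i) * (\<Sum>s=1..i. p s) = c i + csh i" by simp
          qed simp
          have "(\<Sum>s=1..1. p s) = q" by (simp add: p_def)
          then show ?thesis unfolding cost_num_def
            using sum1[OF b, of "\<lambda>i. (c i + csh i) * (\<Sum>s=1..i. p s)"] e by simp
        qed
        moreover have "S = (c 1 + csh 1) + (\<Sum>i=2..b. (c i + csh i))"
          unfolding S_def using sum1[OF b] by simp
        ultimately show ?thesis by simp
      qed
      have a1pos: "c 1 + csh 1 > 0" using cpos cshnn b by force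
      have Sge: "S - (c 1 + csh 1) \<ge> 0"
      proof -
        have "(\<Sum>i=2..b. c i + csh i) \<ge> 0" using anonn by (auto intro: sum_nonneg)
        then show ?thesis unfolding S_def using sum1[OF b, of "\<lambda>i. c i + csh i"] by simp
      qed
      have numnn: "cost_num b cov c csh p \<ge> 0" using nump cov a1pos q0 Sge by simp
      have numlt: "cost_num b cov c csh p < cov + S"
      proof -
        have "(c 1 + csh 1) * q < (c 1 + csh 1) * 1" using a1pos q0 by (intro mult_strict_left_mono) auto
        then show ?thesis using nump by simp
      qed
      have "cost_num b cov c csh p / cost_den b L p \<le> cost_num b cov c csh p / (1 / (2 * M))"
        using numnn den_ge Mpos denpos by (intro divide_left_mono) auto
      also have "\<dots> = cost_num b cov c csh p * (2 * M)" by simp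
      also have "\<dots> < (cov + S) * (2 * M)" using numlt Mpos by simp
      finally have lt: "cost_num b cov c csh p / cost_den b L p < (cov + S) * (2 * M)" .
      have "cost b cov c csh L p < cost b cov c csh L e1"
      proof -
        have "cost b cov c csh L p = ereal (cost_num b cov c csh p / cost_den b L p)"
          unfolding cost_def using denpos by simp
        then show ?thesis using cost_e1 lt by simp
      qed
      moreover have "cost b cov c csh L e1 \<le> cost b cov c csh L p"
        using H pv unfolding e1_def by auto
      ultimately show False by simp
    qed
  next
    assume LM0: "L 1 1 = Max ((\<lambda>i. L i 1) ` {1..b})"
    then have LM: "L 1 1 = M" unfolding M_def .
    show "\<forall>p. prob_vec b p \<longrightarrow>
            cost b cov c csh L (\<lambda>s. if s = 1 then 1 else 0) \<le> cost b cov c csh L p"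
    proof (intro allI impI)
      fix p assume pv: "prob_vec b p"
      have pnn: "p s \<ge> 0" if "s \<in> {1..b}" for s using pv that unfolding prob_vec_def by auto
      have p1le: "p 1 \<le> 1"
      proof -
        have "(\<Sum>s=2..b. p s) \<ge> 0" using pnn by (auto intro: sum_nonneg)
        then show ?thesis using pv sum1[OF b, of p] unfolding prob_vec_def by simp
      qed
      have den_le: "cost_den b L p \<le> p 1 / (2 * L 1 1)"
        unfolding cost_den_def using b by (intro Min_le) (auto intro!: image_eqI[where x=1])
      have den_nn: "cost_den b L p \<ge> 0"
        unfolding cost_den_def
      proof (rule Min.boundedI)
        show "finite ((\<lambda>i. \<Sum>s = 1..i. p s / (2 * L i s)) ` {1..b})" by simp
        show "(\<lambda>i. \<Sum>s = 1..i. p s / (2 * L i s)) ` {1..b} \<noteq> {}" using b by auto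
        fix y assume "y \<in> (\<lambda>i. \<Sum>s = 1..i. p s / (2 * L i s)) ` {1..b}"
        then obtain i where i: "i \<in> {1..b}" "y = (\<Sum>s = 1..i. p s / (2 * L i s))" by auto
        have "\<forall>s\<in>{1..i}. 0 \<le> p s / (2 * L i s)"
          using pnn Lpos i(1) by (auto intro!: divide_nonneg_pos)
        then have "0 \<le> (\<Sum>s = 1..i. p s / (2 * L i s))" by (intro sum_nonneg) blast
        then show "0 \<le> y" using i(2) by simp
      qed
      show "cost b cov c csh L (\<lambda>s. if s = 1 then 1 else 0) \<le> cost b cov c csh L p"
      proof (cases "cost_den b L p = 0")
        case True then show ?thesis unfolding cost_def by simp
      next
        case False
        then have dpos: "cost_den b L p > 0" using den_nn by simp
        have L11: "L 1 1 > 0" using L1pos b by auto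
        have p1pos: "p 1 > 0"
        proof (rule ccontr)
          assume "\<not> p 1 > 0"
          then have "p 1 / (2 * L 1 1) \<le> 0" using L11 by (simp add: divide_nonpos_pos)
          then show False using dpos den_le by linarith
        qed
        have Pge: "(\<Sum>s=1..i. p s) \<ge> p 1" if "i \<in> {1..b}" for i
          using sum1[of i p] that pnn by (auto intro!: sum_nonneg)
        have "cost_num b cov c csh p \<ge> p 1 * (cov + S)"
        proof -
          have "p 1 * S = (\<Sum>i=1..b. (c i + csh i) * p 1)" unfolding S_def
            by (simp add: sum_distrib_left mult.commute)
          also have "\<dots> \<le> (\<Sum>i=1..b. (c i + csh i) * (\<Sum>s=1..i. p s))"
            using Pge anonn by (intro sum_mono mult_left_mono) auto
          finally have "p 1 * S \<le> (\<Sum>i=1..b. (c i + csh i) * (\<Sum>s=1..i. p s))" .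
          moreover have "p 1 * cov \<le> cov" using mult_right_mono[OF p1le cov] by simp
          ultimately show ?thesis unfolding cost_num_def by (simp add: algebra_simps)
        qed
        then have "p 1 * (cov + S) / cost_den b L p \<le> cost_num b cov c csh p / cost_den b L p"
          using dpos by (simp add: divide_right_mono)
        moreover have "p 1 * (cov + S) / (p 1 / (2 * L 1 1)) \<le> p 1 * (cov + S) / cost_den b L p"
          using dpos den_le p1pos cov Snn L11 by (intro divide_left_mono) (auto intro!: mult_pos_pos divide_pos_pos)
        moreover have "p 1 * (cov + S) / (p 1 / (2 * L 1 1)) = (cov + S) * (2 * M)"
          using p1pos LM by simp
        ultimately have "(cov + S) * (2 * M) \<le> cost_num b cov c csh p / cost_den b L p"
          by linarith
        then show ?thesis using cost_e1 False unfolding e1_def cost_def by simp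
      qed
    qed
  qed
qed

end
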